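(* Assume $L$ is irreducible. Then $$R\ge\frac{\lambda_2}{\mu_m^2}UU,\qquad L^\top L\ge\frac{\gamma_2}{\mu_m^2}UU,\qquad \frac{\lambda_m}{\gamma_2}L^\top L\ge R\ge\frac{\lambda_2}{\rho(L^\top L)}L^\top L,$$ where $M\ge N$ means $M-N$ is positive semidefinite.
   Context: $L=D-\mathcal A$ is the Laplacian of a weighted directed graph on $m$ agents ($\mathcal A=(a_{ij})$ nonnegative with zero diagonal, $D$ the diagonal matrix of row sums of $\mathcal A$). For irreducible $L$, $\xi$ is the positive vector with $\xi^\top L=0$ and $\sum_i\xi_i=1$, $\Xi=\mathrm{diag}(\xi)$. $R=\frac12(\Xi L+L^\top\Xi)$ with eigenvalues $0=\lambda_1<\lambda_2\le\dots\le\lambda_m$; $U=\Xi-\xi\xi^\top$ with eigenvalues $0=\mu_1<\mu_2\le\dots\le\mu_m$; $L^\top L$ with eigenvalues $0=\gamma_1<\gamma_2\le\dots\le\gamma_m=\rho(L^\top L)$, $\rho$ the spectral radius. *)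

theory Defs
  imports "HOL-Analysis.Analysis" "HOL-Computational_Algebra.Polynomial"
begin

definition laplacian :: "real^'n^'n \<Rightarrow> real^'n^'n" where
  "laplacian A = (\<chi> i j. if i = j then (\<Sum>k\<in>UNIV. A $ i $ k) else 0) - A"

(* irreducible: the directed graph with an edge i -> j whenever i \<noteq> j and M_ij \<noteq> 0
   is strongly connected *)
definition irreducible_mat :: "real^'n^'n \<Rightarrow> bool" where
  "irreducible_mat M \<longleftrightarrow> (\<forall>i j. (i, j) \<in> {(i, j). i \<noteq> j \<and> M $ i $ j \<noteq> 0}\<^sup>+)"

definition diag_vec :: "real^'n \<Rightarrow> real^'n^'n" where
  "diag_vec v = (\<chi> i j. if i = j then v $ i else 0)"

definition outer_prod :: "real^'n \<Rightarrow> real^'n \<Rightarrow> real^'n^'n" where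
  "outer_prod u v = (\<chi> i j. u $ i * v $ j)"

definition charpoly :: "real^'n^'n \<Rightarrow> real poly" where
  "charpoly A = det ((\<chi> i j. if i = j then [:0, 1:] else 0) - (\<chi> i j. [:A $ i $ j:]))"

definition eig_count :: "real^'n^'n \<Rightarrow> real \<Rightarrow> nat" where
  "eig_count A t = (\<Sum>r\<in>{r. poly (charpoly A) r = 0 \<and> r \<le> t}. order r (charpoly A))"

(* k-th smallest eigenvalue (k = 1, ..., n), counted with multiplicity *)
definition eigval :: "nat \<Rightarrow> real^'n^'n \<Rightarrow> real" where
  "eigval k A = Inf {t. k \<le> eig_count A t}"

definition spectral_radius :: "real^'n^'n \<Rightarrow> real" where
  "spectral_radius A = Sup {cmod z | z. poly (map_poly complex_of_real (charpoly A)) z = 0}"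

definition loewner_ge :: "real^'n^'n \<Rightarrow> real^'n^'n \<Rightarrow> bool" where
  "loewner_ge M N \<longleftrightarrow> (\<forall>x. 0 \<le> x \<bullet> ((M - N) *v x))"

definition R_mat :: "real^'n \<Rightarrow> real^'n^'n \<Rightarrow> real^'n^'n" where
  "R_mat \<xi> L = (1/2) *\<^sub>R (diag_vec \<xi> ** L + transpose L ** diag_vec \<xi>)"

definition U_mat :: "real^'n \<Rightarrow> real^'n^'n" where
  "U_mat \<xi> = diag_vec \<xi> - outer_prod \<xi> \<xi>"

end

theory Submission
  imports Defs
begin

lemma inner_sym_mat:
  fixes S :: "real^'n^'n"
  assumes "transpose S = S"
  shows "x \<bullet> (S *v y) = (S *v x) \<bullet> y"
proof -
  have "x \<bullet> (S *v y) = (x v* S) \<bullet> y" by (simp add: dot_lmul_matrix)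
  also have "x v* S = transpose S *v x" by simp
  finally show ?thesis using assms by simp
qed

lemma quad_zero:
  fixes a b :: real
  assumes h: "\<And>t. 2 * t * a + t * t * b \<le> 0" and b: "b \<le> 0"
  shows "a = 0"
proof -
  define t where "t = a / (1 - b)"
  have pos: "1 - b > 0" using b by simp
  have "2 * t * a + t * t * b \<le> 0" by (rule h)
  hence "(2 * t * a + t * t * b) * ((1 - b) * (1 - b)) \<le> 0"
    using pos by (simp add: mult_nonpos_nonneg)
  also have "(2 * t * a + t * t * b) * ((1 - b) * (1 - b)) = 2 * a * (t * (1 - b)) * (1 - b) + (t * (1 - b)) * (t * (1 - b)) * b"
    by (simp add: algebra_simps)
  also have "t * (1 - b) = a" unfolding t_def using pos by simp
  also have "2 * a * a * (1 - b) + a * a * b = a * a * (2 - b)" by (simp add: algebra_simps)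
  finally have "a * a * (2 - b) \<le> 0" .
  moreover have "2 - b > 0" using b by simp
  ultimately have "a * a \<le> 0" by (simp add: mult_le_0_iff)
  thus ?thesis by (simp add: mult_le_0_iff) (smt (verit) mult_le_0_iff)?
qed

lemma sym_step:
  fixes S :: "real^'n^'n" and B :: "(real^'n) set"
  assumes sym: "transpose S = S" and fin: "finite B" and cardB: "card B < CARD('n)"
    and eig: "\<forall>b\<in>B. \<exists>c. S *v b = c *\<^sub>R b"
  obtains u m where "norm u = 1" "\<forall>b\<in>B. b \<bullet> u = 0" "S *v u = m *\<^sub>R u"
proof -
  define W where "W = {y. \<forall>b\<in>B. b \<bullet> y = 0}"
  have "dim B \<le> card B" by (rule dim_le_card'[OF fin])
  hence "dim B < DIM(real^'n)" using cardB by simp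
  then obtain z where z0: "z \<noteq> 0" and zo: "\<And>y. y \<in> span B \<Longrightarrow> orthogonal z y"
    using orthogonal_to_subspace_exists by blast
  have zW: "z \<in> W" unfolding W_def using zo span_base
    by (auto simp: orthogonal_def inner_commute)
  have Wsc: "c *\<^sub>R y \<in> W" if "y \<in> W" for c y using that by (auto simp: W_def)
  have Wdiff: "y - w \<in> W" if "y \<in> W" "w \<in> W" for y w using that by (auto simp: W_def inner_diff_right)
  have Wadd: "y + w \<in> W" if "y \<in> W" "w \<in> W" for y w using that by (auto simp: W_def inner_add_right)
  have Winv: "S *v y \<in> W" if "y \<in> W" for y
  proof -
    { fix b assume b: "b \<in> B"
      then obtain c where c: "S *v b = c *\<^sub>R b" using eig by blast
      have "b \<bullet> (S *v y) = (S *v b) \<bullet> y" by (rule inner_sym_mat[OF sym])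
      also have "\<dots> = 0" using c b that by (simp add: W_def)
      finally have "b \<bullet> (S *v y) = 0" . }
    thus ?thesis by (simp add: W_def)
  qed
  have Weq: "W = (\<Inter>b\<in>B. {y. b \<bullet> y = 0})" by (auto simp: W_def)
  have clW: "closed W" unfolding Weq by (intro closed_INT ballI closed_hyperplane)
  define K where "K = W \<inter> sphere 0 1"
  have cK: "compact K" unfolding K_def
    using compact_Int_closed[OF compact_sphere clW, of 0 1] by (simp add: Int_commute)
  have "z /\<^sub>R norm z \<in> K" using z0 zW Wsc by (simp add: K_def)
  hence Kne: "K \<noteq> {}" by blast
  define f where "f y = y \<bullet> (S *v y)" for y
  have cf: "continuous_on K f" unfolding f_def
    by (intro continuous_on_inner continuous_on_id matrix_vector_mult_linear_continuous_on)
  obtain u where uK: "u \<in> K" and umax: "\<And>y. y \<in> K \<Longrightarrow> f y \<le> f u"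
    using continuous_attains_sup[OF cK Kne cf] by blast
  define m where "m = f u"
  have uW: "u \<in> W" and nu: "norm u = 1" using uK by (auto simp: K_def)
  have uu: "u \<bullet> u = 1" using nu by (simp add: dot_square_norm)
  have fsc: "f (c *\<^sub>R y) = c * c * f y" for c y by (simp add: f_def matrix_vector_mult_scaleR)
  have claim1: "f y \<le> m * (y \<bullet> y)" if yW: "y \<in> W" for y
  proof (cases "y = 0")
    case True thus ?thesis by (simp add: f_def)
  next
    case False
    hence ny: "norm y > 0" by simp
    have "(1 / norm y) *\<^sub>R y \<in> K" using Wsc[OF yW] False by (simp add: K_def)
    hence "f ((1 / norm y) *\<^sub>R y) \<le> m" using umax m_def by blast
    hence "f y / (norm y * norm y) \<le> m" by (simp add: fsc)
    hence "f y \<le> m * (norm y * norm y)" using ny by (simp add: divide_le_eq)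
    thus ?thesis by (simp add: dot_square_norm power2_eq_square)
  qed
  define w where "w = S *v u - m *\<^sub>R u"
  have wW: "w \<in> W" unfolding w_def by (intro Wdiff Winv uW Wsc)
  define a where "a = w \<bullet> w"
  define b where "b = f w - m * (w \<bullet> w)"
  have b0: "b \<le> 0" using claim1[OF wW] by (simp add: b_def)
  have "2 * t * a + t * t * b \<le> 0" for t
  proof -
    have "u + t *\<^sub>R w \<in> W" by (intro Wadd uW Wsc wW)
    from claim1[OF this] have h: "f (u + t *\<^sub>R w) \<le> m * ((u + t *\<^sub>R w) \<bullet> (u + t *\<^sub>R w))" .
    have s1: "u \<bullet> (S *v w) = w \<bullet> (S *v u)"
      using inner_sym_mat[OF sym, of u w] by (simp add: inner_commute)
    have e1: "f (u + t *\<^sub>R w) = f u + 2 * t * (w \<bullet> (S *v u)) + t * t * f w"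
      unfolding f_def by (simp add: matrix_vector_right_distrib matrix_vector_mult_scaleR
          inner_add_left inner_add_right s1 algebra_simps inner_commute)
    have e2: "(u + t *\<^sub>R w) \<bullet> (u + t *\<^sub>R w) = 1 + 2 * t * (w \<bullet> u) + t * t * (w \<bullet> w)"
      by (simp add: inner_add_left inner_add_right uu algebra_simps inner_commute)
    have aa: "a = w \<bullet> (S *v u) - m * (w \<bullet> u)"
      unfolding a_def by (subst (2) w_def) (simp add: inner_diff_right)
    show ?thesis using h unfolding e1 e2 aa b_def m_def[symmetric] by (simp add: algebra_simps)
  qed
  hence "a = 0" using quad_zero b0 by blast
  hence "w = 0" by (simp add: a_def)
  hence "S *v u = m *\<^sub>R u" by (simp add: w_def)
  moreover have "\<forall>b\<in>B. b \<bullet> u = 0" using uW by (simp add: W_def)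
  ultimately show ?thesis using that nu by blast
qed


lemma sym_eigbasis_set:
  fixes S :: "real^'n^'n" assumes sym: "transpose S = S"
  shows "k \<le> CARD('n) \<Longrightarrow> \<exists>B. finite B \<and> card B = k \<and>
     (\<forall>b\<in>B. norm b = 1 \<and> (\<exists>c. S *v b = c *\<^sub>R b)) \<and>
     (\<forall>b\<in>B. \<forall>b'\<in>B. b \<noteq> b' \<longrightarrow> b \<bullet> b' = 0)"
proof (induction k)
  case 0 show ?case by (intro exI[of _ "{}"]) auto
next
  case (Suc k)
  then obtain B where fB: "finite B" and cB: "card B = k"
    and nB: "\<forall>b\<in>B. norm b = 1 \<and> (\<exists>c. S *v b = c *\<^sub>R b)"
    and oB: "\<forall>b\<in>B. \<forall>b'\<in>B. b \<noteq> b' \<longrightarrow> b \<bullet> b' = 0" by auto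
  have "card B < CARD('n)" using Suc.prems cB by simp
  then obtain u m where nu: "norm u = 1" and ou: "\<forall>b\<in>B. b \<bullet> u = 0" and eu: "S *v u = m *\<^sub>R u"
    using sym_step[OF sym fB] nB by metis
  have uB: "u \<notin> B"
  proof
    assume "u \<in> B"
    hence "u \<bullet> u = 0" using ou by blast
    thus False using nu by simp
  qed
  show ?case
    apply (rule exI[of _ "insert u B"])
    using fB cB uB nB oB ou nu eu by (auto simp: inner_commute)
qed

lemma spectral_exists:
  fixes S :: "real^'n^'n" assumes sym: "transpose S = S"
  obtains v :: "'n \<Rightarrow> real^'n" and d :: "'n \<Rightarrow> real"
  where "\<And>i j. v i \<bullet> v j = (if i = j then 1 else 0)" "\<And>i. S *v v i = d i *\<^sub>R v i"
proof -
  obtain B where fB: "finite B" and cB: "card B = CARD('n)"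
    and nB: "\<forall>b\<in>B. norm b = 1 \<and> (\<exists>c. S *v b = c *\<^sub>R b)"
    and oB: "\<forall>b\<in>B. \<forall>b'\<in>B. b \<noteq> b' \<longrightarrow> b \<bullet> b' = 0"
    using sym_eigbasis_set[OF sym, of "CARD('n)"] by auto
  obtain h where h: "bij_betw h (UNIV :: 'n set) B"
    using finite_same_card_bij[of "UNIV :: 'n set" B] fB cB by auto
  define d where "d i = (SOME c. S *v h i = c *\<^sub>R h i)" for i
  have hB: "h i \<in> B" for i using h by (auto simp: bij_betw_def)
  have e: "S *v h i = d i *\<^sub>R h i" for i
    unfolding d_def by (rule someI_ex) (use nB hB in blast)
  have o: "h i \<bullet> h j = (if i = j then 1 else 0)" for i j
  proof (cases "i = j")
    case True thus ?thesis using nB hB[of i] by (simp add: dot_square_norm)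
  next
    case False
    hence "h i \<noteq> h j" using h by (auto simp: bij_betw_def inj_on_def)
    thus ?thesis using oB hB False by auto
  qed
  show ?thesis using that[OF o e] .
qed

lemma inner_combo:
  fixes v :: "'n \<Rightarrow> real^'n"
  assumes on: "\<And>i j. v i \<bullet> v j = (if i = j then 1 else 0)"
  shows "(\<Sum>i\<in>UNIV. c i *\<^sub>R v i) \<bullet> (\<Sum>j\<in>UNIV. e j *\<^sub>R v j) = (\<Sum>i\<in>UNIV. c i * e i)"
  by (simp add: inner_sum_left inner_sum_right on if_distrib cong: if_cong) (simp add: mult.commute)

lemma orthonormal_expand:
  fixes v :: "'n \<Rightarrow> real^'n"
  assumes on: "\<And>i j. v i \<bullet> v j = (if i = j then 1 else 0)"
  shows "x = (\<Sum>i\<in>UNIV. (v i \<bullet> x) *\<^sub>R v i)"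
proof -
  define Q :: "real^'n^'n" where "Q = (\<chi> r i. v i $ r)"
  have "transpose Q ** Q = mat 1"
    by (simp add: Q_def vec_eq_iff matrix_matrix_mult_def transpose_def mat_def
        on[symmetric] inner_vec_def)
  hence QQ: "Q ** transpose Q = mat 1" using matrix_left_right_inverse by blast
  have "Q *v (transpose Q *v x) = (Q ** transpose Q) *v x" by (rule matrix_vector_mul_assoc)
  hence "x = Q *v (transpose Q *v x)" by (simp add: QQ del: transpose_matrix_vector)
  also have "\<dots> = (\<Sum>i\<in>UNIV. (transpose Q *v x) $ i *s column i Q)" by (rule matrix_mult_sum)
  also have "\<dots> = (\<Sum>i\<in>UNIV. (v i \<bullet> x) *\<^sub>R v i)"
    by (simp add: Q_def column_def transpose_def matrix_vector_mult_def inner_vec_def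
        scalar_mult_eq_scaleR vector_matrix_mult_def mult.commute)
  finally show ?thesis .
qed


definition pm :: "real^'n^'n \<Rightarrow> real poly^'n^'n" where
  "pm M = (\<chi> i j. [:M $ i $ j:])"

definition Xm :: "real poly^'n^'n" where
  "Xm = (\<chi> i j. if i = j then [:0, 1:] else 0)"

lemma charpoly_pm: "charpoly A = det (Xm - pm A)"
  by (simp add: charpoly_def Xm_def pm_def)

lemma pm_mult: "pm (A ** B) = pm A ** pm B"
  by (simp add: pm_def vec_eq_iff matrix_matrix_mult_def sum_to_poly) (simp add: mult.commute)

lemma pm_mat1: "pm (mat 1) = mat 1"
  by (simp add: pm_def vec_eq_iff mat_def)

lemma pm_diff: "pm (A - B) = pm A - pm B"
  by (simp add: pm_def vec_eq_iff)

lemma mm_diff_l: fixes A :: "'a::ring_1^'n^'n" shows "A ** (B - C) = A ** B - A ** C"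
  by (simp add: vec_eq_iff matrix_matrix_mult_def algebra_simps sum_subtractf)

lemma mm_diff_r: fixes A :: "'a::ring_1^'n^'n" shows "(B - C) ** A = B ** A - C ** A"
  by (simp add: vec_eq_iff matrix_matrix_mult_def algebra_simps sum_subtractf)

lemma if_times: "(if P then a else b) * c = (if P then a * c else b * c)"
  by simp

lemma Xm_r: "A ** Xm = (\<chi> i j. A $ i $ j * [:0, 1:])"
  by (simp add: vec_eq_iff matrix_matrix_mult_def Xm_def if_distrib cong: if_cong)

lemma Xm_l: "Xm ** A = (\<chi> i j. [:0, 1:] * A $ i $ j)"
  by (simp add: vec_eq_iff matrix_matrix_mult_def Xm_def if_times cong: if_cong)

lemma Xm_mid: "A ** Xm ** B = Xm ** (A ** B)"
  unfolding Xm_r Xm_l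
  by (simp add: vec_eq_iff matrix_matrix_mult_def sum_distrib_left mult_ac)

lemma Xm_right: "Xm ** mat 1 = Xm"
  by (simp add: matrix_mul_rid)

lemma charpoly_eig:
  fixes S :: "real^'n^'n" and v :: "'n \<Rightarrow> real^'n"
  assumes on: "\<And>i j. v i \<bullet> v j = (if i = j then 1 else 0)"
    and ev: "\<And>i. S *v v i = d i *\<^sub>R v i"
  shows "charpoly S = (\<Prod>i\<in>UNIV. [:- d i, 1:])"
proof -
  define Q :: "real^'n^'n" where "Q = (\<chi> r i. v i $ r)"
  define D :: "real^'n^'n" where "D = (\<chi> i j. if i = j then d i else 0)"
  have QtQ: "transpose Q ** Q = mat 1"
    by (simp add: Q_def vec_eq_iff matrix_matrix_mult_def transpose_def mat_def
        on[symmetric] inner_vec_def)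
  hence QQt: "Q ** transpose Q = mat 1" using matrix_left_right_inverse by blast
  have SQ: "S ** Q = Q ** D"
  proof -
    have "(S ** Q) $ r $ i = (Q ** D) $ r $ i" for r i
    proof -
      have "(S ** Q) $ r $ i = (S *v v i) $ r"
        by (simp add: Q_def matrix_matrix_mult_def matrix_vector_mult_def)
      also have "\<dots> = d i * v i $ r" by (simp add: ev)
      also have "\<dots> = (Q ** D) $ r $ i"
        by (simp add: Q_def D_def matrix_matrix_mult_def if_distrib cong: if_cong)
      finally show ?thesis .
    qed
    thus ?thesis by (simp add: vec_eq_iff)
  qed
  have QSQ: "transpose Q ** S ** Q = D"
    by (simp add: matrix_mul_assoc[symmetric] SQ) (simp add: matrix_mul_assoc QtQ matrix_mul_lid)
  have key: "pm (transpose Q) ** (Xm - pm S) ** pm Q = Xm - pm D"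
  proof -
    have "pm (transpose Q) ** (Xm - pm S) ** pm Q =
          pm (transpose Q) ** Xm ** pm Q - pm (transpose Q) ** pm S ** pm Q"
      by (simp add: mm_diff_l mm_diff_r)
    also have "pm (transpose Q) ** Xm ** pm Q = Xm"
      by (simp add: Xm_mid pm_mult[symmetric] QtQ pm_mat1 matrix_mul_rid)
    also have "pm (transpose Q) ** pm S ** pm Q = pm D"
      by (simp add: pm_mult[symmetric] QSQ)
    finally show ?thesis .
  qed
  have "det (pm (transpose Q)) * det (pm Q) = 1"
    by (simp add: det_mul[symmetric] pm_mult[symmetric] QtQ pm_mat1 det_I)
  hence "det (Xm - pm S) = det (pm (transpose Q) ** (Xm - pm S) ** pm Q)"
    by (simp add: det_mul mult_ac)
  also have "\<dots> = det (Xm - pm D)" by (simp add: key)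
  also have "\<dots> = (\<Prod>i\<in>UNIV. (Xm - pm D) $ i $ i)"
    by (rule det_diagonal) (simp add: Xm_def pm_def D_def)
  also have "\<dots> = (\<Prod>i\<in>UNIV. [:- d i, 1:])"
    by (simp add: Xm_def pm_def D_def)
  finally show ?thesis by (simp add: charpoly_pm)
qed


lemma order_prod_lin:
  fixes d :: "'a \<Rightarrow> real"
  assumes "finite A"
  shows "order r (\<Prod>i\<in>A. [:- d i, 1:]) = card {i\<in>A. d i = r}"
  using assms
proof (induction A rule: finite_induct)
  case empty thus ?case by simp
next
  case (insert x A)
  have nz: "(\<Prod>i\<in>A. [:- d i, 1:]) \<noteq> 0" by (simp add: insert.hyps(1))
  have nz1: "[:- d x, 1:] \<noteq> 0" by simp
  have nz2: "[:- d x, 1:] * (\<Prod>i\<in>A. [:- d i, 1:]) \<noteq> 0" using nz nz1 mult_eq_0_iff by blast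
  have ox: "order r [:- d x, 1:] = (if d x = r then 1 else 0)"
  proof (cases "d x = r")
    case True thus ?thesis using order_power_n_n[of r 1] by simp
  next
    case False
    have "poly [:- d x, 1:] r \<noteq> 0" using False by simp
    thus ?thesis using False by (simp add: order_0I)
  qed
  have "order r (\<Prod>i\<in>insert x A. [:- d i, 1:]) = order r [:- d x, 1:] + order r (\<Prod>i\<in>A. [:- d i, 1:])"
    using order_mult[OF nz2] by (simp only: prod.insert[OF insert.hyps])
  also have "\<dots> = (if d x = r then 1 else 0) + card {i\<in>A. d i = r}" using ox insert.IH by simp
  also have "\<dots> = card {i\<in>insert x A. d i = r}"
  proof (cases "d x = r")
    case True
    have "{i\<in>insert x A. d i = r} = insert x {i\<in>A. d i = r}" using True by auto
    thus ?thesis using True insert.hyps by simp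
  next
    case False
    have "{i\<in>insert x A. d i = r} = {i\<in>A. d i = r}" using False by auto
    thus ?thesis using False by simp
  qed
  finally show ?case .
qed

lemma eig_count_eq:
  fixes S :: "real^'n^'n" and d :: "'n \<Rightarrow> real"
  assumes cp: "charpoly S = (\<Prod>i\<in>UNIV. [:- d i, 1:])"
  shows "eig_count S t = card {i. d i \<le> t}"
proof -
  define Rt where "Rt = {r. r \<in> range d \<and> r \<le> t}"
  have roots: "{r. poly (charpoly S) r = 0 \<and> r \<le> t} = Rt"
    unfolding cp Rt_def by (auto simp: poly_prod)
  have fRt: "finite Rt" unfolding Rt_def by simp
  have "eig_count S t = (\<Sum>r\<in>Rt. order r (charpoly S))"
    unfolding eig_count_def roots ..
  also have "\<dots> = (\<Sum>r\<in>Rt. card {i. d i = r})"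
    unfolding cp by (simp add: order_prod_lin)
  also have "\<dots> = card (\<Union>r\<in>Rt. {i. d i = r})"
    by (rule card_UN_disjoint[symmetric]) (use fRt in auto)
  also have "(\<Union>r\<in>Rt. {i. d i = r}) = {i. d i \<le> t}" by (auto simp: Rt_def)
  finally show ?thesis .
qed

lemma inf_count:
  fixes d :: "'n::finite \<Rightarrow> real" and k :: nat
  defines "T \<equiv> {t. k \<le> card {i. d i \<le> t}}"
  assumes k1: "1 \<le> k" and kn: "k \<le> CARD('n)"
  shows "Inf T \<in> T" "\<And>t. t \<in> T \<Longrightarrow> Inf T \<le> t"
proof -
  define C where "C = {d j | j. k \<le> card {i. d i \<le> d j}}"
  have fC: "finite C" unfolding C_def by simp
  have "Max (range d) \<in> range d" by (rule Max_in) auto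
  then obtain j0 where j0: "d j0 = Max (range d)" by (metis imageE)
  have "{i. d i \<le> d j0} = UNIV" using j0 by auto
  hence "d j0 \<in> C" using kn unfolding C_def by auto
  hence Cne: "C \<noteq> {}" by auto
  define m where "m = Min C"
  have mC: "m \<in> C" unfolding m_def using fC Cne by simp
  have mT: "m \<in> T" using mC unfolding C_def T_def by auto
  have mlow: "m \<le> t" if tT: "t \<in> T" for t
  proof -
    define A where "A = {i. d i \<le> t}"
    have "k \<le> card A" using tT by (simp add: T_def A_def)
    hence Ane: "A \<noteq> {}" using k1 by auto
    define t' where "t' = Max (d ` A)"
    have t'in: "t' \<in> d ` A" unfolding t'_def using Ane by simp
    then obtain j where jA: "j \<in> A" and dj: "d j = t'" by auto
    have t't: "t' \<le> t" using jA dj by (simp add: A_def)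
    have "{i. d i \<le> t'} = A"
    proof
      show "{i. d i \<le> t'} \<subseteq> A" using t't by (auto simp: A_def)
      show "A \<subseteq> {i. d i \<le> t'}" unfolding t'_def by auto
    qed
    hence "t' \<in> C" unfolding C_def using \<open>k \<le> card A\<close> dj by auto
    hence "m \<le> t'" unfolding m_def using fC by simp
    thus ?thesis using t't by simp
  qed
  have "Inf T = m" by (rule cInf_eq_minimum[OF mT mlow])
  thus "Inf T \<in> T" "\<And>t. t \<in> T \<Longrightarrow> Inf T \<le> t" using mT mlow by auto
qed


lemma poly_map_of_real: "poly (map_poly complex_of_real p) (complex_of_real x) = complex_of_real (poly p x)"
  by (induction p) (auto simp: map_poly_pCons)

lemma spectral_pkg:
  fixes S :: "real^'n^'n"
  assumes sym: "transpose S = S"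
  obtains v :: "'n \<Rightarrow> real^'n" and d :: "'n \<Rightarrow> real"
  where "\<And>i j. v i \<bullet> v j = (if i = j then 1 else 0)" "\<And>i. S *v v i = d i *\<^sub>R v i"
    "\<And>x z. x \<bullet> z = (\<Sum>i\<in>UNIV. (v i \<bullet> x) * (v i \<bullet> z))"
    "\<And>x. x \<bullet> (S *v x) = (\<Sum>i\<in>UNIV. d i * ((v i \<bullet> x) * (v i \<bullet> x)))"
    "\<And>x. (S *v x) \<bullet> (S *v x) = (\<Sum>i\<in>UNIV. (d i * d i) * ((v i \<bullet> x) * (v i \<bullet> x)))"
    "\<And>k. 1 \<le> k \<Longrightarrow> k \<le> CARD('n) \<Longrightarrow> k \<le> card {i. d i \<le> eigval k S}"
    "\<And>k t. 1 \<le> k \<Longrightarrow> k \<le> CARD('n) \<Longrightarrow> k \<le> card {i. d i \<le> t} \<Longrightarrow> eigval k S \<le> t"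
    "\<And>i. \<bar>d i\<bar> \<le> spectral_radius S"
proof -
  obtain v :: "'n \<Rightarrow> real^'n" and d :: "'n \<Rightarrow> real"
    where on: "\<And>i j. v i \<bullet> v j = (if i = j then 1 else 0)"
    and ev: "\<And>i. S *v v i = d i *\<^sub>R v i"
    using spectral_exists[OF sym] by blast
  have exp: "x = (\<Sum>i\<in>UNIV. (v i \<bullet> x) *\<^sub>R v i)" for x by (rule orthonormal_expand[OF on])
  have Sexp: "S *v x = (\<Sum>i\<in>UNIV. (d i * (v i \<bullet> x)) *\<^sub>R v i)" for x
  proof -
    have E: "(\<Sum>i\<in>UNIV. (v i \<bullet> x) *\<^sub>R v i) = x" by (rule exp[symmetric])
    have "S *v x = S *v (\<Sum>i\<in>UNIV. (v i \<bullet> x) *\<^sub>R v i)" by (simp only: E)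
    also have "\<dots> = (\<Sum>i\<in>UNIV. (d i * (v i \<bullet> x)) *\<^sub>R v i)"
      by (simp add: vec.sum matrix_vector_mult_scaleR ev mult.commute)
    finally show ?thesis .
  qed
  have f1: "x \<bullet> z = (\<Sum>i\<in>UNIV. (v i \<bullet> x) * (v i \<bullet> z))" for x z
  proof -
    have E: "(\<Sum>i\<in>UNIV. (v i \<bullet> x) *\<^sub>R v i) = x" by (rule exp[symmetric])
    have E2: "(\<Sum>i\<in>UNIV. (v i \<bullet> z) *\<^sub>R v i) = z" by (rule exp[symmetric])
    show ?thesis using inner_combo[OF on, of "\<lambda>i. v i \<bullet> x" "\<lambda>i. v i \<bullet> z"] by (simp only: E E2)
  qed
  have f2: "x \<bullet> (S *v x) = (\<Sum>i\<in>UNIV. d i * ((v i \<bullet> x) * (v i \<bullet> x)))" for x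
  proof -
    have "x \<bullet> (S *v x) = (\<Sum>i\<in>UNIV. (v i \<bullet> x) *\<^sub>R v i) \<bullet> (\<Sum>i\<in>UNIV. (d i * (v i \<bullet> x)) *\<^sub>R v i)"
    proof -
      have E: "(\<Sum>i\<in>UNIV. (v i \<bullet> x) *\<^sub>R v i) = x" by (rule exp[symmetric])
      show ?thesis by (simp only: E Sexp)
    qed
    also have "\<dots> = (\<Sum>i\<in>UNIV. d i * ((v i \<bullet> x) * (v i \<bullet> x)))"
      by (simp add: inner_combo[OF on] mult_ac)
    finally show ?thesis .
  qed
  have f3: "(S *v x) \<bullet> (S *v x) = (\<Sum>i\<in>UNIV. (d i * d i) * ((v i \<bullet> x) * (v i \<bullet> x)))" for x
    by (simp only: Sexp inner_combo[OF on]) (simp add: mult_ac)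
  have cp: "charpoly S = (\<Prod>i\<in>UNIV. [:- d i, 1:])" by (rule charpoly_eig[OF on ev])
  have ev_eq: "eigval k S = Inf {t. k \<le> card {i. d i \<le> t}}" for k
    by (simp add: eigval_def eig_count_eq[OF cp])
  have f4: "k \<le> card {i. d i \<le> eigval k S}" if "1 \<le> k" "k \<le> CARD('n)" for k
    using inf_count(1)[where d=d and k=k, OF that] unfolding ev_eq by simp
  have f5: "eigval k S \<le> t" if "1 \<le> k" "k \<le> CARD('n)" "k \<le> card {i. d i \<le> t}" for k t
    using inf_count(2)[where d=d and k=k, OF that(1,2), of t] that(3) unfolding ev_eq by simp
  have f6: "\<bar>d i\<bar> \<le> spectral_radius S" for i
  proof -
    define P where "P = map_poly complex_of_real (charpoly S)"
    have cnz: "charpoly S \<noteq> 0" unfolding cp by simp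
    have Pnz: "P \<noteq> 0" unfolding P_def using cnz by (subst map_poly_eq_0_iff) auto
    have eq: "{cmod z | z. poly P z = 0} = cmod ` {z. poly P z = 0}" by auto
    have fin: "finite {cmod z | z. poly P z = 0}" unfolding eq using poly_roots_finite[OF Pnz] by simp
    have "poly P (complex_of_real (d i)) = 0"
      unfolding P_def poly_map_of_real cp by (auto simp: poly_prod)
    hence "cmod (complex_of_real (d i)) \<in> {cmod z | z. poly P z = 0}" by blast
    hence "cmod (complex_of_real (d i)) \<le> Sup {cmod z | z. poly P z = 0}"
      using fin by (simp add: le_cSup_finite)
    thus ?thesis unfolding spectral_radius_def P_def by simp
  qed
  show ?thesis using that[OF on ev f1 f2 f3 f4 f5 f6] .
qed


lemma card_ge2_ex:
  assumes "finite A" "2 \<le> card A"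
  obtains a b where "a \<in> A" "b \<in> A" "a \<noteq> b"
proof -
  have "\<not> (\<forall>a1\<in>A. \<forall>a2\<in>A. a1 = a2)"
    using card_le_Suc0_iff_eq[OF assms(1)] assms(2) by auto
  thus ?thesis using that by blast
qed

lemma sym_upper:
  fixes S :: "real^'n^'n"
  assumes sym: "transpose S = S"
  shows "y \<bullet> (S *v y) \<le> eigval CARD('n) S * (y \<bullet> y)"
    and "y \<bullet> (S *v y) \<le> spectral_radius S * (y \<bullet> y)"
    and "0 \<le> spectral_radius S"
    and "(\<And>x. 0 \<le> x \<bullet> (S *v x)) \<Longrightarrow> 0 \<le> eigval CARD('n) S"
    and "(\<And>x. 0 \<le> x \<bullet> (S *v x)) \<Longrightarrow> (S *v y) \<bullet> (S *v y) \<le> (eigval CARD('n) S)\<^sup>2 * (y \<bullet> y)"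
proof -
  obtain v :: "'n \<Rightarrow> real^'n" and d :: "'n \<Rightarrow> real"
    where on: "\<And>i j. v i \<bullet> v j = (if i = j then 1 else 0)" and ev: "\<And>i. S *v v i = d i *\<^sub>R v i"
    and f1: "\<And>x z. x \<bullet> z = (\<Sum>i\<in>UNIV. (v i \<bullet> x) * (v i \<bullet> z))"
    and f2: "\<And>x. x \<bullet> (S *v x) = (\<Sum>i\<in>UNIV. d i * ((v i \<bullet> x) * (v i \<bullet> x)))"
    and f3: "\<And>x. (S *v x) \<bullet> (S *v x) = (\<Sum>i\<in>UNIV. (d i * d i) * ((v i \<bullet> x) * (v i \<bullet> x)))"
    and f4: "\<And>k. 1 \<le> k \<Longrightarrow> k \<le> CARD('n) \<Longrightarrow> k \<le> card {i. d i \<le> eigval k S}"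
    and f5: "\<And>k t. 1 \<le> k \<Longrightarrow> k \<le> CARD('n) \<Longrightarrow> k \<le> card {i. d i \<le> t} \<Longrightarrow> eigval k S \<le> t"
    and f6: "\<And>i. \<bar>d i\<bar> \<le> spectral_radius S"
    apply (rule spectral_pkg[OF sym]) by blast
  define m where "m = eigval CARD('n) S"
  have "CARD('n) \<le> card {i. d i \<le> m}" unfolding m_def by (rule f4) auto
  hence "{i. d i \<le> m} = UNIV" by (intro card_seteq) auto
  hence dm: "d i \<le> m" for i by auto
  have sq: "0 \<le> (v i \<bullet> y) * (v i \<bullet> y)" for i by simp
  have "y \<bullet> (S *v y) \<le> (\<Sum>i\<in>UNIV. m * ((v i \<bullet> y) * (v i \<bullet> y)))"
    unfolding f2 by (intro sum_mono mult_right_mono dm sq)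
  also have "\<dots> = m * (y \<bullet> y)" by (simp add: f1[of y y] sum_distrib_left)
  finally show "y \<bullet> (S *v y) \<le> eigval CARD('n) S * (y \<bullet> y)" by (simp add: m_def)
  have "y \<bullet> (S *v y) \<le> (\<Sum>i\<in>UNIV. spectral_radius S * ((v i \<bullet> y) * (v i \<bullet> y)))"
    unfolding f2 by (intro sum_mono mult_right_mono sq) (use f6 abs_le_D1 in blast)
  also have "\<dots> = spectral_radius S * (y \<bullet> y)" by (simp add: f1[of y y] sum_distrib_left)
  finally show "y \<bullet> (S *v y) \<le> spectral_radius S * (y \<bullet> y)" .
  obtain i0 :: 'n where True by blast
  show "0 \<le> spectral_radius S" using f6[of i0] by simp
  assume psd: "\<And>x. 0 \<le> x \<bullet> (S *v x)"
  have d0: "0 \<le> d i" for i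
  proof -
    have "v i \<bullet> (S *v v i) = d i" by (simp add: ev on)
    thus ?thesis using psd[of "v i"] by simp
  qed
  show "0 \<le> eigval CARD('n) S" using dm[of i0] d0[of i0] unfolding m_def by simp
  have "(S *v y) \<bullet> (S *v y) \<le> (\<Sum>i\<in>UNIV. (m * m) * ((v i \<bullet> y) * (v i \<bullet> y)))"
    unfolding f3 by (intro sum_mono mult_right_mono sq mult_mono dm d0) (use d0 dm order_trans in blast)+
  also have "\<dots> = m\<^sup>2 * (y \<bullet> y)" by (simp add: f1[of y y] sum_distrib_left power2_eq_square)
  finally show "(S *v y) \<bullet> (S *v y) \<le> (eigval CARD('n) S)\<^sup>2 * (y \<bullet> y)" by (simp add: m_def)
qed


lemma psd_lower:
  fixes S :: "real^'n^'n"
  assumes sym: "transpose S = S" and psd: "\<And>x. 0 \<le> x \<bullet> (S *v x)"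
    and ker: "S *v 1 = 0" and n2: "2 \<le> CARD('n)"
  shows "0 \<le> eigval 2 S"
    and "y \<bullet> 1 = 0 \<Longrightarrow> eigval 2 S * (y \<bullet> y) \<le> y \<bullet> (S *v y)"
    and "eigval 2 S \<le> 0 \<Longrightarrow> \<exists>u w. u \<bullet> u = 1 \<and> w \<bullet> w = 1 \<and> u \<bullet> w = 0 \<and> S *v u = 0 \<and> S *v w = 0"
proof -
  obtain v :: "'n \<Rightarrow> real^'n" and d :: "'n \<Rightarrow> real"
    where on: "\<And>i j. v i \<bullet> v j = (if i = j then 1 else 0)" and ev: "\<And>i. S *v v i = d i *\<^sub>R v i"
    and f1: "\<And>x z. x \<bullet> z = (\<Sum>i\<in>UNIV. (v i \<bullet> x) * (v i \<bullet> z))"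
    and f2: "\<And>x. x \<bullet> (S *v x) = (\<Sum>i\<in>UNIV. d i * ((v i \<bullet> x) * (v i \<bullet> x)))"
    and f3: "\<And>x. (S *v x) \<bullet> (S *v x) = (\<Sum>i\<in>UNIV. (d i * d i) * ((v i \<bullet> x) * (v i \<bullet> x)))"
    and f4: "\<And>k. 1 \<le> k \<Longrightarrow> k \<le> CARD('n) \<Longrightarrow> k \<le> card {i. d i \<le> eigval k S}"
    and f5: "\<And>k t. 1 \<le> k \<Longrightarrow> k \<le> CARD('n) \<Longrightarrow> k \<le> card {i. d i \<le> t} \<Longrightarrow> eigval k S \<le> t"
    and f6: "\<And>i. \<bar>d i\<bar> \<le> spectral_radius S"
    apply (rule spectral_pkg[OF sym]) by blast
  define l where "l = eigval 2 S"
  have d0: "0 \<le> d i" for i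
  proof -
    have "v i \<bullet> (S *v v i) = d i" by (simp add: ev on)
    thus ?thesis using psd[of "v i"] by simp
  qed
  have c2: "2 \<le> card {i. d i \<le> l}" unfolding l_def by (rule f4) (use n2 in auto)
  then obtain i1 i2 where i1: "d i1 \<le> l" and i2: "d i2 \<le> l" and i12: "i1 \<noteq> i2"
    using card_ge2_ex[of "{i. d i \<le> l}"] by auto
  show l0: "0 \<le> eigval 2 S" using d0[of i1] i1 by (simp add: l_def)
  show "eigval 2 S \<le> 0 \<Longrightarrow> \<exists>u w. u \<bullet> u = 1 \<and> w \<bullet> w = 1 \<and> u \<bullet> w = 0 \<and> S *v u = 0 \<and> S *v w = 0"
  proof -
    assume "eigval 2 S \<le> 0"
    hence "d i1 = 0" "d i2 = 0" using i1 i2 d0[of i1] d0[of i2] by (auto simp: l_def)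
    thus ?thesis using on[of i1 i1] on[of i2 i2] on[of i1 i2] ev[of i1] ev[of i2] i12
      by (intro exI[of _ "v i1"] exI[of _ "v i2"]) simp
  qed
  assume y1: "y \<bullet> 1 = 0"
  show "eigval 2 S * (y \<bullet> y) \<le> y \<bullet> (S *v y)"
  proof (cases "l = 0")
    case True thus ?thesis using psd[of y] by (simp add: l_def)
  next
    case False
    hence lpos: "0 < l" using l0 by (simp add: l_def)
    define A where "A = {i. d i < l}"
    have cA: "card A \<le> 1"
    proof (rule ccontr)
      assume "\<not> card A \<le> 1"
      hence cA2: "2 \<le> card A" by simp
      have fA: "finite A" by simp
      hence Ane: "A \<noteq> {}" using cA2 by auto
      define t where "t = Max (d ` A)"
      have "t \<in> d ` A" unfolding t_def using fA Ane by simp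
      hence tl: "t < l" by (auto simp: A_def)
      have "A \<subseteq> {i. d i \<le> t}" unfolding t_def using fA by auto
      hence "card A \<le> card {i. d i \<le> t}" by (intro card_mono) auto
      hence "l \<le> t" unfolding l_def using cA2 n2 by (intro f5) auto
      thus False using tl by simp
    qed
    define c where "c i = v i \<bullet> 1" for i
    have dc: "d i * c i = 0" for i
    proof -
      have "v i \<bullet> (S *v 1) = (S *v v i) \<bullet> 1" by (rule inner_sym_mat[OF sym])
      thus ?thesis using ker by (simp add: ev c_def)
    qed
    have vy: "v i \<bullet> y = 0" if iA: "i \<in> A" for i
    proof -
      have cj: "c j = 0" if "j \<noteq> i" for j
      proof -
        have "j \<notin> A" using cA iA that card_le_Suc0_iff_eq[of A] by auto
        hence "d j \<noteq> 0" using lpos by (auto simp: A_def)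
        thus ?thesis using dc[of j] by simp
      qed
      have "(1::real^'n) \<bullet> 1 = (\<Sum>j\<in>UNIV. c j * c j)" by (simp add: f1[of 1 1] c_def)
      also have "\<dots> = c i * c i" using cj by (subst sum.remove[of _ i]) auto
      finally have "c i * c i = (1::real^'n) \<bullet> 1" by simp
      moreover have "(1::real^'n) \<bullet> 1 \<noteq> 0" by simp
      ultimately have ci: "c i \<noteq> 0" by auto
      have "y \<bullet> 1 = (\<Sum>j\<in>UNIV. (v j \<bullet> y) * c j)" by (simp add: f1[of y 1] c_def)
      also have "\<dots> = (v i \<bullet> y) * c i" using cj by (subst sum.remove[of _ i]) auto
      finally show ?thesis using y1 ci by simp
    qed
    have "(\<Sum>i\<in>UNIV. l * ((v i \<bullet> y) * (v i \<bullet> y))) \<le> (\<Sum>i\<in>UNIV. d i * ((v i \<bullet> y) * (v i \<bullet> y)))"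
    proof (rule sum_mono)
      fix i :: 'n
      show "l * ((v i \<bullet> y) * (v i \<bullet> y)) \<le> d i * ((v i \<bullet> y) * (v i \<bullet> y))"
      proof (cases "i \<in> A")
        case True thus ?thesis using vy by simp
      next
        case False thus ?thesis by (intro mult_right_mono) (auto simp: A_def)
      qed
    qed
    thus ?thesis by (simp add: f2 f1[of y y] sum_distrib_left l_def)
  qed
qed


lemma diag_mv: "diag_vec xi *v z = (\<chi> i. xi $ i * z $ i)"
  by (simp add: diag_vec_def vec_eq_iff matrix_vector_mult_def if_times cong: if_cong)

lemma diag_sym: "transpose (diag_vec xi) = diag_vec xi"
  by (simp add: diag_vec_def vec_eq_iff transpose_def)

lemma lap_entry: "laplacian A $ i $ j = (if i = j then (\<Sum>k\<in>UNIV. A $ i $ k) else 0) - A $ i $ j"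
  by (simp add: laplacian_def)

lemma lap_mv: "(laplacian A *v x) $ i = (\<Sum>k\<in>UNIV. A $ i $ k) * x $ i - (\<Sum>j\<in>UNIV. A $ i $ j * x $ j)"
  by (simp add: lap_entry matrix_vector_mult_def left_diff_distrib sum_subtractf if_times cong: if_cong)

lemma lap_one: "laplacian A *v 1 = 0"
  by (simp add: vec_eq_iff lap_mv)

lemma inner_transpose: "x \<bullet> (transpose M *v z) = (M *v x) \<bullet> (z :: real^'n)"
proof -
  have "x \<bullet> (transpose M *v z) = (z v* M) \<bullet> x" by (simp add: inner_commute)
  also have "\<dots> = z \<bullet> (M *v x)" by (rule dot_lmul_matrix)
  finally show ?thesis by (simp add: inner_commute)
qed

lemma R_mv: "R_mat xi L *v x = (1/2) *\<^sub>R (diag_vec xi *v (L *v x) + transpose L *v (diag_vec xi *v x))"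
  unfolding R_mat_def
  by (simp add: scaleR_matrix_vector_assoc[symmetric] matrix_vector_mult_add_rdistrib
      matrix_vector_mul_assoc)

lemma diag_mm_l: "(diag_vec xi ** M) $ i $ j = xi $ i * M $ i $ j"
  by (simp add: diag_vec_def matrix_matrix_mult_def if_times cong: if_cong)

lemma diag_mm_r: "(M ** diag_vec xi) $ i $ j = M $ i $ j * xi $ j"
  by (simp add: diag_vec_def matrix_matrix_mult_def if_distrib cong: if_cong)

lemma R_sym: "transpose (R_mat xi L) = R_mat xi L"
  unfolding R_mat_def
  by (simp add: vec_eq_iff transpose_def diag_mm_l diag_mm_r mult.commute)

lemma R_quad: "x \<bullet> (R_mat xi L *v x) = x \<bullet> (diag_vec xi *v (L *v x))"
proof -
  have "x \<bullet> (transpose L *v (diag_vec xi *v x)) = (L *v x) \<bullet> (diag_vec xi *v x)"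
    by (rule inner_transpose)
  also have "\<dots> = (diag_vec xi *v x) \<bullet> (L *v x)" by (rule inner_commute)
  also have "\<dots> = x \<bullet> (diag_vec xi *v (L *v x))"
    by (simp add: diag_mv inner_vec_def mult_ac)
  finally show ?thesis by (simp add: R_mv inner_add_right)
qed

lemma U_mv: "U_mat xi *v x = (\<chi> i. xi $ i * x $ i - xi $ i * (xi \<bullet> x))"
proof -
  have o: "outer_prod xi xi *v x = (\<chi> i. xi $ i * (xi \<bullet> x))"
    by (simp add: outer_prod_def vec_eq_iff matrix_vector_mult_def inner_vec_def sum_distrib_left mult_ac)
  show ?thesis by (simp add: U_mat_def matrix_vector_mult_diff_rdistrib diag_mv o vec_eq_iff)
qed

lemma U_sym: "transpose (U_mat xi) = U_mat xi"
  by (simp add: U_mat_def vec_eq_iff transpose_def diag_vec_def outer_prod_def mult.commute)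

lemma U_one: assumes "(\<Sum>i\<in>UNIV. xi $ i) = 1" shows "U_mat xi *v 1 = 0"
  using assms by (simp add: U_mv vec_eq_iff inner_vec_def)

lemma U_psd:
  assumes s: "(\<Sum>i\<in>UNIV. xi $ i) = 1" and p: "\<forall>i. 0 \<le> xi $ i"
  shows "0 \<le> x \<bullet> (U_mat xi *v x)"
proof -
  define m where "m = xi \<bullet> x"
  have m: "m = (\<Sum>i\<in>UNIV. xi $ i * x $ i)" by (simp add: m_def inner_vec_def)
  have "0 \<le> (\<Sum>i\<in>UNIV. xi $ i * (x $ i - m)\<^sup>2)" using p by (intro sum_nonneg) auto
  also have "\<dots> = (\<Sum>i\<in>UNIV. xi $ i * (x $ i * x $ i)) - 2 * m * (\<Sum>i\<in>UNIV. xi $ i * x $ i) + m * m * (\<Sum>i\<in>UNIV. xi $ i)"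
    by (simp add: power2_eq_square algebra_simps sum.distrib sum_subtractf sum_distrib_left)
  also have "\<dots> = x \<bullet> (U_mat xi *v x)"
    by (simp add: s m[symmetric] U_mv inner_vec_def algebra_simps sum_subtractf sum_distrib_left m_def)
  finally show ?thesis .
qed


lemma R_psd:
  fixes A :: "real^'n^'n" and xi :: "real^'n"
  assumes nonneg: "\<forall>i j. 0 \<le> A $ i $ j" and xp: "\<forall>i. 0 < xi $ i"
    and xl: "xi v* laplacian A = 0"
  shows "0 \<le> x \<bullet> (R_mat xi (laplacian A) *v x)"
proof -
  define D where "D i = (\<Sum>k\<in>UNIV. A $ i $ k)" for i
  have bal: "(\<Sum>i\<in>UNIV. xi $ i * A $ i $ j) = xi $ j * D j" for j
  proof -
    have "0 = (xi v* laplacian A) $ j" using xl by simp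
    also have "\<dots> = (\<Sum>i\<in>UNIV. xi $ i * ((if i = j then D i else 0) - A $ i $ j))"
      unfolding D_def by (simp add: vector_matrix_mult_def lap_entry)
    also have "\<dots> = xi $ j * D j - (\<Sum>i\<in>UNIV. xi $ i * A $ i $ j)"
      by (simp add: right_diff_distrib sum_subtractf if_distrib[of "(*) (xi $ _)"] cong: if_cong)
    finally show ?thesis by simp
  qed
  define Q where "Q = x \<bullet> (diag_vec xi *v (laplacian A *v x))"
  have Q: "Q = (\<Sum>i\<in>UNIV. xi $ i * D i * (x $ i * x $ i)) - (\<Sum>i\<in>UNIV. \<Sum>j\<in>UNIV. xi $ i * A $ i $ j * (x $ i * x $ j))"
    by (simp add: Q_def diag_mv inner_vec_def lap_mv D_def[symmetric] right_diff_distrib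
        sum_subtractf sum_distrib_left mult_ac)
  have t1: "(\<Sum>i\<in>UNIV. \<Sum>j\<in>UNIV. xi $ i * A $ i $ j * (x $ i * x $ i)) = (\<Sum>i\<in>UNIV. xi $ i * D i * (x $ i * x $ i))"
    by (simp add: D_def sum_distrib_left sum_distrib_right mult_ac)
  have t3: "(\<Sum>i\<in>UNIV. \<Sum>j\<in>UNIV. xi $ i * A $ i $ j * (x $ j * x $ j)) = (\<Sum>i\<in>UNIV. xi $ i * D i * (x $ i * x $ i))"
  proof -
    have "(\<Sum>i\<in>UNIV. \<Sum>j\<in>UNIV. xi $ i * A $ i $ j * (x $ j * x $ j)) = (\<Sum>j\<in>UNIV. \<Sum>i\<in>UNIV. xi $ i * A $ i $ j * (x $ j * x $ j))"
      by (rule sum.swap)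
    also have "\<dots> = (\<Sum>j\<in>UNIV. (\<Sum>i\<in>UNIV. xi $ i * A $ i $ j) * (x $ j * x $ j))"
      by (simp add: sum_distrib_right)
    also have "\<dots> = (\<Sum>j\<in>UNIV. xi $ j * D j * (x $ j * x $ j))" by (simp add: bal)
    finally show ?thesis .
  qed
  have E: "(\<Sum>i\<in>UNIV. \<Sum>j\<in>UNIV. xi $ i * A $ i $ j * ((x $ i - x $ j) * (x $ i - x $ j)))
     = (\<Sum>i\<in>UNIV. \<Sum>j\<in>UNIV. xi $ i * A $ i $ j * (x $ i * x $ i))
       - 2 * (\<Sum>i\<in>UNIV. \<Sum>j\<in>UNIV. xi $ i * A $ i $ j * (x $ i * x $ j))
       + (\<Sum>i\<in>UNIV. \<Sum>j\<in>UNIV. xi $ i * A $ i $ j * (x $ j * x $ j))"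
    by (simp add: algebra_simps sum.distrib sum_subtractf sum_distrib_left)
  have "0 \<le> (\<Sum>i\<in>UNIV. \<Sum>j\<in>UNIV. xi $ i * A $ i $ j * ((x $ i - x $ j) * (x $ i - x $ j)))"
    using nonneg xp by (intro sum_nonneg mult_nonneg_nonneg[OF mult_nonneg_nonneg zero_le_square]) (auto intro: less_imp_le)
  also have "\<dots> = 2 * Q" unfolding E t1 t3 Q by simp
  finally have "0 \<le> Q" by simp
  thus ?thesis by (simp add: R_quad Q_def)
qed

lemma lap_kernel:
  fixes A :: "real^'n^'n"
  assumes nonneg: "\<forall>i j. 0 \<le> A $ i $ j" and irred: "irreducible_mat (laplacian A)"
    and ker: "laplacian A *v u = 0"
  shows "u $ i = u $ j"
proof -
  define M where "M = Max (range (\<lambda>i. u $ i))"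
  have "M \<in> range (\<lambda>i. u $ i)" unfolding M_def by (rule Max_in) auto
  then obtain i0 where i0: "u $ i0 = M" by (metis imageE)
  have le: "u $ k \<le> M" for k unfolding M_def by (rule Max_ge) auto
  define E where "E = {(i, j). i \<noteq> j \<and> laplacian A $ i $ j \<noteq> 0}"
  have stp: "u $ b = M" if "u $ a = M" "(a, b) \<in> E" for a b
  proof -
    have ab: "a \<noteq> b" and Aab: "A $ a $ b \<noteq> 0" using that(2) by (auto simp: E_def lap_entry)
    have "0 = (laplacian A *v u) $ a" using ker by simp
    also have "\<dots> = (\<Sum>j\<in>UNIV. A $ a $ j * (M - u $ j))"
      by (simp add: lap_mv that(1) right_diff_distrib sum_subtractf sum_distrib_left mult_ac)
    finally have s0: "(\<Sum>j\<in>UNIV. A $ a $ j * (M - u $ j)) = 0" by simp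
    have nn: "\<And>j. j \<in> UNIV \<Longrightarrow> 0 \<le> A $ a $ j * (M - u $ j)" using nonneg le by (simp add: mult_nonneg_nonneg)
    define f where "f j = A $ a $ j * (M - u $ j)" for j
    have h: "(\<Sum>j\<in>UNIV. f j) = 0 \<longleftrightarrow> (\<forall>j\<in>UNIV. f j = 0)"
      by (rule sum_nonneg_eq_0_iff) (use nn in \<open>auto simp: f_def\<close>)
    have "\<forall>j\<in>UNIV. f j = 0" using h s0 by (simp add: f_def)
    hence "A $ a $ b * (M - u $ b) = 0" by (simp add: f_def)
    thus ?thesis using Aab by simp
  qed
  have tr: "u $ b = M" if "(a, b) \<in> E\<^sup>+" "u $ a = M" for a b
    using that
  proof (induction rule: trancl_induct)
    case (base y) thus ?case using stp by blast
  next
    case (step y z) thus ?case using stp by blast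
  qed
  have all: "u $ k = M" for k
  proof (cases "k = i0")
    case True thus ?thesis using i0 by simp
  next
    case False
    have "(i0, k) \<in> E\<^sup>+" using irred by (simp add: irreducible_mat_def E_def)
    thus ?thesis using tr i0 by blast
  qed
  show ?thesis using all by simp
qed

lemma card_ge2:
  fixes A :: "real^'n^'n"
  assumes irred: "irreducible_mat A"
  shows "2 \<le> CARD('n)"
proof -
  obtain i0 :: 'n where True by blast
  have "(i0, i0) \<in> {(i, j). i \<noteq> j \<and> A $ i $ j \<noteq> 0}\<^sup>+" using irred by (simp add: irreducible_mat_def)
  then obtain c where "(i0, c) \<in> {(i, j). i \<noteq> j \<and> A $ i $ j \<noteq> 0}" by (auto elim: converse_tranclE)
  hence "i0 \<noteq> c" by simp
  hence "card {i0, c} = 2" by simp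
  moreover have "card {i0, c} \<le> CARD('n)" by (rule card_mono) auto
  ultimately show ?thesis by simp
qed


lemma div_bound:
  fixes l q a m :: real
  assumes "0 \<le> l" "0 \<le> q" "a \<le> m * q" "0 \<le> m"
  shows "l / m * a \<le> l * q"
proof (cases "m = 0")
  case True thus ?thesis using assms by simp
next
  case False
  hence "l / m * a \<le> l / m * (m * q)" using assms by (intro mult_left_mono) auto
  also have "\<dots> = l * q" using False by simp
  finally show ?thesis .
qed

lemma proj_facts:
  fixes S :: "real^'n^'n" and x :: "real^'n"
  assumes sym: "transpose S = S" and S1: "S *v 1 = 0"
  defines "y \<equiv> x - ((x \<bullet> 1) / ((1::real^'n) \<bullet> 1)) *\<^sub>R 1"
  shows "y \<bullet> 1 = 0" "S *v y = S *v x" "y \<bullet> (S *v y) = x \<bullet> (S *v x)"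
proof -
  have nz: "(1::real^'n) \<bullet> 1 \<noteq> 0" by simp
  show "y \<bullet> 1 = 0" unfolding y_def using nz by (simp add: inner_diff_left)
  show Sy: "S *v y = S *v x" unfolding y_def
    by (simp add: matrix_vector_mult_diff_distrib matrix_vector_mult_scaleR S1)
  have "1 \<bullet> (S *v x) = (S *v 1) \<bullet> x" by (rule inner_sym_mat[OF sym])
  hence "1 \<bullet> (S *v x) = 0" using S1 by simp
  thus "y \<bullet> (S *v y) = x \<bullet> (S *v x)" unfolding Sy unfolding y_def by (simp add: inner_diff_left)
qed

theorem mainTheorem10:
  fixes A :: "real^'n^'n" and \<xi> :: "real^'n"
  assumes nonneg: "\<forall>i j. 0 \<le> A $ i $ j"
    and zero_diag: "\<forall>i. A $ i $ i = 0"
    and irred: "irreducible_mat (laplacian A)"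
    and xi_pos: "\<forall>i. 0 < \<xi> $ i"
    and xi_left: "\<xi> v* laplacian A = 0"
    and xi_sum: "(\<Sum>i\<in>UNIV. \<xi> $ i) = 1"
  shows
    "loewner_ge (R_mat \<xi> (laplacian A))
       ((eigval 2 (R_mat \<xi> (laplacian A)) / (eigval CARD('n) (U_mat \<xi>))\<^sup>2)
          *\<^sub>R (U_mat \<xi> ** U_mat \<xi>))
   \<and> loewner_ge (transpose (laplacian A) ** laplacian A)
       ((eigval 2 (transpose (laplacian A) ** laplacian A) / (eigval CARD('n) (U_mat \<xi>))\<^sup>2)
          *\<^sub>R (U_mat \<xi> ** U_mat \<xi>))
   \<and> loewner_ge
       ((eigval CARD('n) (R_mat \<xi> (laplacian A)) / eigval 2 (transpose (laplacian A) ** laplacian A))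
          *\<^sub>R (transpose (laplacian A) ** laplacian A))
       (R_mat \<xi> (laplacian A))
   \<and> loewner_ge (R_mat \<xi> (laplacian A))
       ((eigval 2 (R_mat \<xi> (laplacian A)) / spectral_radius (transpose (laplacian A) ** laplacian A))
          *\<^sub>R (transpose (laplacian A) ** laplacian A))"
proof -
  define L where "L = laplacian A"
  define R where "R = R_mat \<xi> L"
  define U where "U = U_mat \<xi>"
  define G where "G = transpose L ** L"
  have n2: "2 \<le> CARD('n)" by (rule card_ge2[OF irred])
  have L1: "L *v 1 = 0" by (simp add: L_def lap_one)
  have Lt: "transpose L *v \<xi> = 0" unfolding L_def using xi_left by simp
  have Rsym: "transpose R = R" by (simp add: R_def R_sym)
  have D1: "diag_vec \<xi> *v 1 = \<xi>" by (simp add: diag_mv vec_eq_iff)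
  have Lt': "\<xi> v* L = 0" unfolding L_def by (rule xi_left)
  have R1: "R *v 1 = 0" by (simp add: R_def R_mv L1 D1 Lt')
  have Rpsd: "0 \<le> x \<bullet> (R *v x)" for x
    unfolding R_def L_def by (rule R_psd[OF nonneg xi_pos xi_left])
  have Usym: "transpose U = U" by (simp add: U_def U_sym)
  have U1: "U *v 1 = 0" by (simp add: U_def U_one[OF xi_sum])
  have Upsd: "0 \<le> x \<bullet> (U *v x)" for x
    unfolding U_def by (rule U_psd[OF xi_sum]) (use xi_pos in \<open>auto intro: less_imp_le\<close>)
  have Gsym: "transpose G = G" by (simp add: G_def matrix_transpose_mul)
  have Gmv: "G *v x = transpose L *v (L *v x)" for x by (simp add: G_def matrix_vector_mul_assoc)
  have Gq: "x \<bullet> (G *v x) = (L *v x) \<bullet> (L *v x)" for x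
    unfolding Gmv by (rule inner_transpose)
  have Gpsd: "0 \<le> x \<bullet> (G *v x)" for x by (simp add: Gq)
  have G1: "G *v 1 = 0" by (simp add: Gmv L1)
  have g2pos: "0 < eigval 2 G"
  proof (rule ccontr)
    assume "\<not> 0 < eigval 2 G"
    then obtain u w where uu: "u \<bullet> u = 1" and ww: "w \<bullet> w = 1" and uw: "u \<bullet> w = 0"
      and Gu: "G *v u = 0" and Gw: "G *v w = 0"
      using psd_lower(3)[OF Gsym Gpsd G1 n2] by auto
    have Lu: "L *v u = 0" using Gq[of u] Gu by simp
    have Lw: "L *v w = 0" using Gq[of w] Gw by simp
    obtain i0 :: 'n where True by blast
    have cu: "u = u $ i0 *\<^sub>R 1"
      using lap_kernel[OF nonneg irred Lu[unfolded L_def]] by (simp add: vec_eq_iff)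
    have cw: "w = w $ i0 *\<^sub>R 1"
      using lap_kernel[OF nonneg irred Lw[unfolded L_def]] by (simp add: vec_eq_iff)
    define N where "N = (1::real^'n) \<bullet> 1"
    have "u \<bullet> w = u $ i0 * w $ i0 * N" unfolding N_def by (subst cu, subst cw) simp
    moreover have "u \<bullet> u = u $ i0 * u $ i0 * N" unfolding N_def by (subst (1 2) cu) simp
    moreover have "w \<bullet> w = w $ i0 * w $ i0 * N" unfolding N_def by (subst (1 2) cw) simp
    ultimately show False using uu ww uw by (auto simp: mult_eq_0_iff)
  qed
  note pR = proj_facts[OF Rsym R1] and pG = proj_facts[OF Gsym G1] and pU = proj_facts[OF Usym U1]
  define P :: "real^'n \<Rightarrow> real^'n" where "P x = x - ((x \<bullet> 1) / ((1::real^'n) \<bullet> 1)) *\<^sub>R 1" for x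
  have yy0: "0 \<le> P x \<bullet> P x" for x by simp
  have UU: "x \<bullet> ((U ** U) *v x) = (U *v P x) \<bullet> (U *v P x)" for x
  proof -
    have "x \<bullet> ((U ** U) *v x) = x \<bullet> (U *v (U *v x))" by (simp add: matrix_vector_mul_assoc)
    also have "\<dots> = (U *v x) \<bullet> (U *v x)" by (rule inner_sym_mat[OF Usym])
    finally show ?thesis using pU(2)[of x] by (simp add: P_def)
  qed
  have R2: "0 \<le> eigval 2 R" by (rule psd_lower(1)[OF Rsym Rpsd R1 n2])
  have G2: "0 \<le> eigval 2 G" by (rule psd_lower(1)[OF Gsym Gpsd G1 n2])
  have Rlow: "eigval 2 R * (P x \<bullet> P x) \<le> x \<bullet> (R *v x)" for x
    using psd_lower(2)[OF Rsym Rpsd R1 n2 pR(1)[of x]] pR(3)[of x] by (simp add: P_def)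
  have Glow: "eigval 2 G * (P x \<bullet> P x) \<le> x \<bullet> (G *v x)" for x
    using psd_lower(2)[OF Gsym Gpsd G1 n2 pG(1)[of x]] pG(3)[of x] by (simp add: P_def)
  have Uup: "(U *v P x) \<bullet> (U *v P x) \<le> (eigval CARD('n) U)\<^sup>2 * (P x \<bullet> P x)" for x
    by (rule sym_upper(5)[OF Usym Upsd])
  have Rup: "x \<bullet> (R *v x) \<le> eigval CARD('n) R * (P x \<bullet> P x)" for x
    using sym_upper(1)[OF Rsym, of "P x"] pR(3)[of x] by (simp add: P_def)
  have Rn0: "0 \<le> eigval CARD('n) R" by (rule sym_upper(4)[OF Rsym Rpsd])
  have Gup: "x \<bullet> (G *v x) \<le> spectral_radius G * (P x \<bullet> P x)" for x
    using sym_upper(2)[OF Rsym, of "P x"] sym_upper(2)[OF Gsym, of "P x"] pG(3)[of x] by (simp add: P_def)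
  have rho0: "0 \<le> spectral_radius G" by (rule sym_upper(3)[OF Gsym])
  have c1: "eigval 2 R / (eigval CARD('n) U)\<^sup>2 * (x \<bullet> ((U ** U) *v x)) \<le> x \<bullet> (R *v x)" for x
    unfolding UU by (rule order_trans[OF div_bound[OF R2 yy0 Uup] Rlow]) simp
  have c2: "eigval 2 G / (eigval CARD('n) U)\<^sup>2 * (x \<bullet> ((U ** U) *v x)) \<le> x \<bullet> (G *v x)" for x
    unfolding UU by (rule order_trans[OF div_bound[OF G2 yy0 Uup] Glow]) simp
  have c3: "x \<bullet> (R *v x) \<le> eigval CARD('n) R / eigval 2 G * (x \<bullet> (G *v x))" for x
  proof -
    have "x \<bullet> (R *v x) \<le> eigval CARD('n) R * (P x \<bullet> P x)" by (rule Rup)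
    also have "\<dots> = eigval CARD('n) R / eigval 2 G * (eigval 2 G * (P x \<bullet> P x))"
      using g2pos by simp
    also have "\<dots> \<le> eigval CARD('n) R / eigval 2 G * (x \<bullet> (G *v x))"
      using Rn0 g2pos by (intro mult_left_mono Glow) auto
    finally show ?thesis .
  qed
  have c4: "eigval 2 R / spectral_radius G * (x \<bullet> (G *v x)) \<le> x \<bullet> (R *v x)" for x
    by (rule order_trans[OF div_bound[OF R2 yy0 Gup rho0] Rlow])
  show ?thesis
    unfolding loewner_ge_def L_def[symmetric] R_def[symmetric] U_def[symmetric] G_def[symmetric]
    using c1 c2 c3 c4
    by (simp add: matrix_vector_mult_diff_rdistrib inner_diff_right scaleR_matrix_vector_assoc[symmetric])
qed

end
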